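(* In the setting described in the context, assume $0<h<\varepsilon$. There is a constant $C$, independent of $h$ and $\varepsilon$, such that for all $v_h\in\widetilde V_h$, $$\varepsilon^{-1}\sum_{T\in\widetilde{\mathcal T}_h}|\varrho|_{0,\infty,T}\,\|v_h\|_{1,T}^2\le C\,\|v_h\|_h^2,$$ where $|\varrho|_{0,\infty,T}=\sup_T|\varrho|$, $\|v\|_{1,T}$ is the $H^1(T)$-norm, and $\|v_h\|_h=\bigl(\varepsilon^{-1}\sum_{T\in\widetilde{\mathcal T}_h}Q_T[\varrho(|v_h|^2+|\nabla v_h|^2)]\bigr)^{1/2}$.
   Context: $n\in\{1,2\}$; $\Omega\subset\mathbb R^{n+1}$ is a bounded polyhedral domain and $\phi:\overline\Omega\to\mathbb R$ is smooth with $0<c_0\le|\nabla\phi|\le c_1$ on $\overline\Omega$. Quadrature: an integer $q\ge0$ and a rule on the reference simplex with weights $\omega_i>0$, $\sum_{i=1}^L\omega_i=1$, points $\widehat b_i$, exact for polynomials of degree $\le q$; on a simplex $T$, $Q_T(g)=|T|\sum_{i=1}^L\omega_ig(b_{i,T})$, $b_{i,T}=\Phi_T(\widehat b_i)$ with $\Phi_T$ the affine map of the reference simplex onto $T$. $\sigma(r)=\cos^{2(q+1)}(r)$ for $|r|\le\pi/2$, $\sigma(r)=0$ otherwise; $\varrho(x)=\sigma(\phi(x)/\varepsilon)$. $\mathcal T_h$ is a regular (shape-regular) simplicial partition of $\overline\Omega$ with mesh size $h=\max_T\operatorname{diam}T$. $\widetilde{\mathcal T}_h=\{T\in\mathcal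 T_h:|\phi(b_{i,T})|\le\varepsilon\arccos(h/\varepsilon)\text{ for all }i=1,\dots,L\}$, $D_h=\bigcup_{T\in\widetilde{\mathcal T}_h}T$, and $\widetilde V_h=\{v\in C(D_h): v\text{ affine on each }T\in\widetilde{\mathcal T}_h\}$. *)

theory Defs
  imports "HOL-Analysis.Analysis"
begin

fun dd :: "'a::real_normed_vector list \<Rightarrow> ('a \<Rightarrow> real) \<Rightarrow> 'a \<Rightarrow> real" where
  "dd [] f = f"
| "dd (v # vs) f = (\<lambda>x. deriv (\<lambda>t. dd vs f (x + t *\<^sub>R v)) 0)"

definition smooth_on :: "'a::real_normed_vector set \<Rightarrow> ('a \<Rightarrow> real) \<Rightarrow> bool" where
  "smooth_on U f \<longleftrightarrow> open U \<and>
     (\<forall>vs. continuous_on U (dd vs f)) \<and>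
     (\<forall>vs v. \<forall>x\<in>U. (\<lambda>t. dd vs f (x + t *\<^sub>R v)) differentiable (at 0))"

definition smooth_on_closure :: "('a::real_normed_vector \<Rightarrow> real) \<Rightarrow> 'a set \<Rightarrow> bool" where
  "smooth_on_closure f S \<longleftrightarrow> (\<exists>U. closure S \<subseteq> U \<and> smooth_on U f)"

definition grad :: "('a::real_inner \<Rightarrow> real) \<Rightarrow> 'a \<Rightarrow> 'a" where
  "grad f x = (SOME g. (f has_derivative (\<lambda>y. g \<bullet> y)) (at x))"

definition polyhedral_domain :: "'a::euclidean_space set \<Rightarrow> bool" where
  "polyhedral_domain \<Omega> \<longleftrightarrow> open \<Omega> \<and> connected \<Omega> \<and> bounded \<Omega> \<and> \<Omega> \<noteq> {} \<and>
     (\<exists>P. finite P \<and> (\<forall>p\<in>P. finite p) \<and> closure \<Omega> = \<Union>((\<lambda>p. convex hull p) ` P))"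

text \<open>Polynomials of total degree at most q: finite linear combinations of products of
  at most q affine functions.\<close>
definition poly_le :: "nat \<Rightarrow> ('a::real_inner \<Rightarrow> real) \<Rightarrow> bool" where
  "poly_le q g \<longleftrightarrow> (\<exists>N (c::nat \<Rightarrow> real) (m::nat \<Rightarrow> nat) (a::nat \<Rightarrow> nat \<Rightarrow> 'a) (b::nat \<Rightarrow> nat \<Rightarrow> real).
      (\<forall>j<N. m j \<le> q) \<and>
      g = (\<lambda>x. \<Sum>j<N. c j * (\<Prod>k<m j. a j k \<bullet> x + b j k)))"

definition Sref :: "'a::euclidean_space set" where
  "Sref = convex hull (insert 0 Basis)"

definition quad_rule :: "nat \<Rightarrow> nat \<Rightarrow> (nat \<Rightarrow> real) \<Rightarrow> (nat \<Rightarrow> 'a::euclidean_space) \<Rightarrow> bool" where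
  "quad_rule q L \<omega> bh \<longleftrightarrow> L \<ge> 1 \<and> (\<forall>i<L. \<omega> i > 0) \<and> (\<Sum>i<L. \<omega> i) = 1 \<and>
     (\<forall>i<L. bh i \<in> (Sref :: 'a set)) \<and>
     (\<forall>g::'a \<Rightarrow> real. poly_le q g \<longrightarrow>
        measure lebesgue (Sref :: 'a set) * (\<Sum>i<L. \<omega> i * g (bh i)) = integral Sref g)"

section \<open>Simplicial meshes (elements given by their affine maps from the reference simplex)\<close>

definition simplex_map :: "('a::euclidean_space \<Rightarrow> 'a) \<Rightarrow> bool" where
  "simplex_map \<Phi> \<longleftrightarrow> linear (\<lambda>x. \<Phi> x - \<Phi> 0) \<and> inj \<Phi>"

definition cell :: "('a::euclidean_space \<Rightarrow> 'a) \<Rightarrow> 'a set" where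
  "cell \<Phi> = \<Phi> ` Sref"

definition verts :: "('a::euclidean_space \<Rightarrow> 'a) \<Rightarrow> 'a set" where
  "verts \<Phi> = \<Phi> ` insert 0 Basis"

definition simplicial_mesh :: "'a::euclidean_space set \<Rightarrow> ('a \<Rightarrow> 'a) set \<Rightarrow> bool" where
  "simplicial_mesh \<Omega> \<T> \<longleftrightarrow> finite \<T> \<and> \<T> \<noteq> {} \<and> (\<forall>\<Phi>\<in>\<T>. simplex_map \<Phi>) \<and>
     \<Union>(cell ` \<T>) = closure \<Omega> \<and>
     (\<forall>\<Phi>\<in>\<T>. \<forall>\<Psi>\<in>\<T>. \<Phi> \<noteq> \<Psi> \<longrightarrow>
        cell \<Phi> \<noteq> cell \<Psi> \<and> cell \<Phi> \<inter> cell \<Psi> = convex hull (verts \<Phi> \<inter> verts \<Psi>))"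

definition inball_diam :: "'a::euclidean_space set \<Rightarrow> real" where
  "inball_diam T = Sup {2 * r | r. r > 0 \<and> (\<exists>x. ball x r \<subseteq> T)}"

definition shape_regular_mesh :: "real \<Rightarrow> 'a::euclidean_space set \<Rightarrow> ('a \<Rightarrow> 'a) set \<Rightarrow> bool" where
  "shape_regular_mesh \<kappa> \<Omega> \<T> \<longleftrightarrow> simplicial_mesh \<Omega> \<T> \<and>
     (\<forall>\<Phi>\<in>\<T>. diameter (cell \<Phi>) \<le> \<kappa> * inball_diam (cell \<Phi>))"

definition meshsize :: "('a::euclidean_space \<Rightarrow> 'a) set \<Rightarrow> real" where
  "meshsize \<T> = Max (diameter ` cell ` \<T>)"

definition sigma :: "nat \<Rightarrow> real \<Rightarrow> real" where
  "sigma q r = (if \<bar>r\<bar> \<le> pi / 2 then cos r ^ (2 * (q + 1)) else 0)"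

definition rho :: "nat \<Rightarrow> real \<Rightarrow> ('a \<Rightarrow> real) \<Rightarrow> 'a \<Rightarrow> real" where
  "rho q \<epsilon> \<phi> x = sigma q (\<phi> x / \<epsilon>)"

definition QT :: "nat \<Rightarrow> (nat \<Rightarrow> real) \<Rightarrow> (nat \<Rightarrow> 'a::euclidean_space) \<Rightarrow> ('a \<Rightarrow> 'a) \<Rightarrow> ('a \<Rightarrow> real) \<Rightarrow> real" where
  "QT L \<omega> bh \<Phi> g = measure lebesgue (cell \<Phi>) * (\<Sum>i<L. \<omega> i * g (\<Phi> (bh i)))"

definition Ttilde :: "nat \<Rightarrow> (nat \<Rightarrow> 'a::euclidean_space) \<Rightarrow> ('a \<Rightarrow> real) \<Rightarrow> real \<Rightarrow> real \<Rightarrow> ('a \<Rightarrow> 'a) set \<Rightarrow> ('a \<Rightarrow> 'a) set" where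
  "Ttilde L bh \<phi> \<epsilon> h \<T> = {\<Phi>\<in>\<T>. \<forall>i<L. \<bar>\<phi> (\<Phi> (bh i))\<bar> \<le> \<epsilon> * arccos (h / \<epsilon>)}"

definition Dh :: "('a::euclidean_space \<Rightarrow> 'a) set \<Rightarrow> 'a set" where
  "Dh \<T>t = \<Union>(cell ` \<T>t)"

definition Vtilde :: "('a::euclidean_space \<Rightarrow> 'a) set \<Rightarrow> ('a \<Rightarrow> real) set" where
  "Vtilde \<T>t = {v. continuous_on (Dh \<T>t) v \<and>
      (\<forall>\<Phi>\<in>\<T>t. \<exists>a c. \<forall>x\<in>cell \<Phi>. v x = a \<bullet> x + c)}"

definition pgrad :: "('a::euclidean_space \<Rightarrow> 'a) \<Rightarrow> ('a \<Rightarrow> real) \<Rightarrow> 'a" where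
  "pgrad \<Phi> v = (SOME a. \<exists>c. \<forall>x\<in>cell \<Phi>. v x = a \<bullet> x + c)"

definition H1sq :: "('a::euclidean_space \<Rightarrow> 'a) \<Rightarrow> ('a \<Rightarrow> real) \<Rightarrow> real" where
  "H1sq \<Phi> v = integral (cell \<Phi>) (\<lambda>x. (v x)\<^sup>2 + (norm (pgrad \<Phi> v))\<^sup>2)"

definition supnorm_on :: "'a set \<Rightarrow> ('a \<Rightarrow> real) \<Rightarrow> real" where
  "supnorm_on T f = (SUP x\<in>T. \<bar>f x\<bar>)"

definition hnorm_sq :: "nat \<Rightarrow> nat \<Rightarrow> (nat \<Rightarrow> real) \<Rightarrow> (nat \<Rightarrow> 'a::euclidean_space) \<Rightarrow> real \<Rightarrow> ('a \<Rightarrow> real)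
     \<Rightarrow> ('a \<Rightarrow> 'a) set \<Rightarrow> ('a \<Rightarrow> real) \<Rightarrow> real" where
  "hnorm_sq q L \<omega> bh \<epsilon> \<phi> \<T>t v =
     (1 / \<epsilon>) * (\<Sum>\<Phi>\<in>\<T>t. QT L \<omega> bh \<Phi> (\<lambda>x. rho q \<epsilon> \<phi> x * ((v x)\<^sup>2 + (norm (pgrad \<Phi> v))\<^sup>2)))"

end

theory Submission
  imports Defs
begin

lemma cos_lip: "\<bar>cos x - cos y\<bar> \<le> \<bar>x - (y::real)\<bar>"
proof -
  have "norm (cos x - cos y) \<le> 1 * norm (x - y)"
    apply (rule field_differentiable_bound[of UNIV cos "\<lambda>t. - sin t" 1 x y])
    by (auto intro!: derivative_eq_intros)
  then show ?thesis by simp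
qed

lemma sigma_nonneg: "0 \<le> sigma q r"
  unfolding sigma_def power_mult by simp

lemma seg:
  fixes f :: "'a::euclidean_space \<Rightarrow> real"
  assumes sm: "smooth_on U f"
    and inU: "\<And>t. t \<in> closed_segment 0 c \<Longrightarrow> z + t *\<^sub>R j \<in> U"
    and bd: "\<And>t. t \<in> closed_segment 0 c \<Longrightarrow> \<bar>dd [j] f (z + t *\<^sub>R j)\<bar> \<le> M"
  shows "\<bar>f (z + c *\<^sub>R j) - f z\<bar> \<le> M * \<bar>c\<bar>"
proof -
  let ?g = "\<lambda>t. f (z + t *\<^sub>R j)"
  have der: "(?g has_field_derivative dd [j] f (z + t *\<^sub>R j)) (at t within closed_segment 0 c)"
    if t: "t \<in> closed_segment 0 c" for t
  proof -
    have "(\<lambda>s. dd [] f ((z + t *\<^sub>R j) + s *\<^sub>R j)) differentiable (at 0)"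
      using sm inU[OF t] unfolding smooth_on_def by blast
    then have "((\<lambda>s. f ((z + t *\<^sub>R j) + s *\<^sub>R j)) has_field_derivative
        deriv (\<lambda>s. f ((z + t *\<^sub>R j) + s *\<^sub>R j)) 0) (at 0)"
      by (simp add: DERIV_deriv_iff_real_differentiable)
    moreover have "(\<lambda>s. f ((z + t *\<^sub>R j) + s *\<^sub>R j)) = (\<lambda>s. ?g (s + t))"
      by (simp add: scaleR_add_left algebra_simps)
    ultimately have "((\<lambda>s. ?g (s + t)) has_field_derivative dd [j] f (z + t *\<^sub>R j)) (at 0)"
      by simp
    then have "(?g has_field_derivative dd [j] f (z + t *\<^sub>R j)) (at (0 + t))"
      using DERIV_shift by blast
    then show ?thesis by (simp add: has_field_derivative_at_within)
  qed
  have "norm (?g c - ?g 0) \<le> M * norm (c - 0)"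
    by (rule field_differentiable_bound[OF convex_closed_segment der])
       (auto simp del: dd.simps simp: bd)
  then show ?thesis by simp
qed

lemma stair:
  fixes f :: "'a::euclidean_space \<Rightarrow> real"
  assumes fin: "finite B" and BB: "B \<subseteq> Basis" and sm: "smooth_on U f"
    and KU: "K \<subseteq> U"
    and bd: "\<And>j y. j \<in> Basis \<Longrightarrow> y \<in> K \<Longrightarrow> \<bar>dd [j] f y\<bar> \<le> M"
    and ball: "\<And>y. dist x y \<le> r \<Longrightarrow> y \<in> K"
    and dr: "(\<Sum>j\<in>Basis. \<bar>d \<bullet> j\<bar>) \<le> r"
  shows "\<bar>f (x + (\<Sum>j\<in>B. (d \<bullet> j) *\<^sub>R j)) - f x\<bar> \<le> M * (\<Sum>j\<in>B. \<bar>d \<bullet> j\<bar>)"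
  using fin BB
proof (induction B rule: finite_induct)
  case empty
  then show ?case by simp
next
  case (insert j B)
  let ?p = "x + (\<Sum>i\<in>B. (d \<bullet> i) *\<^sub>R i)"
  have jB: "j \<in> Basis" using insert by auto
  have IH: "\<bar>f ?p - f x\<bar> \<le> M * (\<Sum>i\<in>B. \<bar>d \<bullet> i\<bar>)" using insert by auto
  have inK: "?p + t *\<^sub>R j \<in> K" if t: "t \<in> closed_segment 0 (d \<bullet> j)" for t
  proof (rule ball)
    have tb: "\<bar>t\<bar> \<le> \<bar>d \<bullet> j\<bar>" using t by (auto simp: closed_segment_eq_real_ivl split: if_splits)
    have "dist x (?p + t *\<^sub>R j) = norm ((\<Sum>i\<in>B. (d \<bullet> i) *\<^sub>R i) + t *\<^sub>R j)"
      using dist_add_cancel[of x 0] by (simp add: add.assoc)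
    also have "\<dots> \<le> norm (\<Sum>i\<in>B. (d \<bullet> i) *\<^sub>R i) + norm (t *\<^sub>R j)" by (rule norm_triangle_ineq)
    also have "\<dots> \<le> (\<Sum>i\<in>B. norm ((d \<bullet> i) *\<^sub>R i)) + norm (t *\<^sub>R j)"
      using norm_sum by (metis add_right_mono)
    also have "(\<Sum>i\<in>B. norm ((d \<bullet> i) *\<^sub>R i)) = (\<Sum>i\<in>B. \<bar>d \<bullet> i\<bar>)"
      using insert by (intro sum.cong) auto
    also have "norm (t *\<^sub>R j) = \<bar>t\<bar>" using jB by simp
    also have "(\<Sum>i\<in>B. \<bar>d \<bullet> i\<bar>) + \<bar>t\<bar> \<le> (\<Sum>i\<in>insert j B. \<bar>d \<bullet> i\<bar>)"
      using insert tb by simp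
    also have "\<dots> \<le> (\<Sum>i\<in>Basis. \<bar>d \<bullet> i\<bar>)"
      using insert by (intro sum_mono2) auto
    finally show "dist x (?p + t *\<^sub>R j) \<le> r" using dr by simp
  qed
  have step: "\<bar>f (?p + (d \<bullet> j) *\<^sub>R j) - f ?p\<bar> \<le> M * \<bar>d \<bullet> j\<bar>"
    by (rule seg[OF sm]) (use inK KU bd jB in auto)
  have eq: "x + (\<Sum>i\<in>insert j B. (d \<bullet> i) *\<^sub>R i) = ?p + (d \<bullet> j) *\<^sub>R j"
    using insert by (simp add: algebra_simps)
  show ?case unfolding eq using step IH insert by (simp add: algebra_simps)
qed

lemma lipschitz_phi:
  fixes f :: "'a::euclidean_space \<Rightarrow> real"
  assumes S: "compact S" and U: "open U" "S \<subseteq> U" and sm: "smooth_on U f"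
  shows "\<exists>Kl\<ge>0. \<forall>x\<in>S. \<forall>y\<in>S. \<bar>f y - f x\<bar> \<le> Kl * norm (y - x)"
proof -
  obtain \<delta> where dpos: "\<delta> > 0" and dU: "(\<Union>x\<in>S. cball x \<delta>) \<subseteq> U"
    using compact_subset_open_imp_cball_epsilon_subset[OF S U] by blast
  define K where "K = {x + y | x y. x \<in> S \<and> y \<in> cball 0 \<delta>}"
  have Kc: "compact K" unfolding K_def by (intro compact_sums S compact_cball)
  have KU: "K \<subseteq> U"
  proof
    fix z assume "z \<in> K"
    then obtain x y where "z = x + y" "x \<in> S" "y \<in> cball 0 \<delta>" unfolding K_def by blast
    then have "z \<in> cball x \<delta>" by (simp add: dist_norm)
    then show "z \<in> U" using dU \<open>x \<in> S\<close> by blast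
  qed
  have inK: "y \<in> K" if "x \<in> S" "dist x y \<le> \<delta>" for x y
    unfolding K_def using that by (intro CollectI exI[of _ x] exI[of _ "y - x"]) (auto simp: dist_norm norm_minus_commute)
  have contU: "continuous_on U (dd vs f)" for vs using sm unfolding smooth_on_def by blast
  define F where "F = (\<lambda>y. \<Sum>j\<in>Basis. \<bar>dd [j] f y\<bar>)"
  have "continuous_on K F" unfolding F_def
    by (intro continuous_intros continuous_on_subset[OF contU KU])
  then have "bounded (F ` K)" using Kc compact_continuous_image compact_imp_bounded by blast
  then obtain M0 where M0: "\<And>y. y \<in> K \<Longrightarrow> norm (F y) \<le> M0" unfolding bounded_iff by blast
  define M where "M = max M0 0"
  have Mb: "\<bar>dd [j] f y\<bar> \<le> M" if "j \<in> Basis" "y \<in> K" for j y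
  proof -
    have "\<bar>dd [j] f y\<bar> \<le> F y" unfolding F_def using that
      by (intro member_le_sum) auto
    also have "\<dots> \<le> M" using M0[OF that(2)] unfolding M_def by simp
    finally show ?thesis .
  qed
  have "continuous_on S f"
    using contU[of "[]"] U(2) continuous_on_subset by fastforce
  then have "bounded (f ` S)" using S compact_continuous_image compact_imp_bounded by blast
  then obtain B0 where B0: "\<And>y. y \<in> S \<Longrightarrow> norm (f y) \<le> B0" unfolding bounded_iff by blast
  define N where "N = real DIM('a)"
  have Npos: "N > 0" unfolding N_def by simp
  define Kl where "Kl = M * N + 2 * max B0 0 * N / \<delta>"
  have Kl0: "Kl \<ge> 0" unfolding Kl_def M_def using Npos dpos by simp
  have main: "\<bar>f y - f x\<bar> \<le> Kl * norm (y - x)" if xS: "x \<in> S" and yS: "y \<in> S" for x y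
  proof -
    define d where "d = y - x"
    have l1: "(\<Sum>j\<in>Basis. \<bar>d \<bullet> j\<bar>) \<le> N * norm d"
    proof -
      have "(\<Sum>j\<in>Basis. \<bar>d \<bullet> j\<bar>) \<le> (\<Sum>j\<in>(Basis::'a set). norm d)"
        by (intro sum_mono) (simp add: Basis_le_norm)
      then show ?thesis by (simp add: N_def)
    qed
    have M0': "M \<ge> 0" unfolding M_def by simp
    show ?thesis
    proof (cases "(\<Sum>j\<in>Basis. \<bar>d \<bullet> j\<bar>) \<le> \<delta>")
      case True
      have "\<bar>f (x + (\<Sum>j\<in>Basis. (d \<bullet> j) *\<^sub>R j)) - f x\<bar> \<le> M * (\<Sum>j\<in>Basis. \<bar>d \<bullet> j\<bar>)"
        by (rule stair[OF finite_Basis order_refl sm KU Mb, of x \<delta>])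
           (use inK xS True in auto)
      moreover have "x + (\<Sum>j\<in>Basis. (d \<bullet> j) *\<^sub>R j) = y"
        by (simp add: euclidean_representation d_def)
      ultimately have "\<bar>f y - f x\<bar> \<le> M * (\<Sum>j\<in>Basis. \<bar>d \<bullet> j\<bar>)" by simp
      also have "\<dots> \<le> M * (N * norm d)" using l1 M0' by (rule mult_left_mono)
      also have "\<dots> \<le> Kl * norm d" unfolding Kl_def using Npos dpos
        by (simp add: distrib_right)
      finally show ?thesis by (simp add: d_def)
    next
      case False
      then have "\<delta> < N * norm d" using l1 by simp
      then have nd: "\<delta> / N < norm d" using Npos by (simp add: field_simps)
      have "\<bar>f y - f x\<bar> \<le> 2 * max B0 0" using B0[OF xS] B0[OF yS] by simp
      also have "\<dots> = (2 * max B0 0 * N / \<delta>) * (\<delta> / N)" using Npos dpos by simp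
      also have "\<dots> \<le> (2 * max B0 0 * N / \<delta>) * norm d"
        using nd Npos dpos by (intro mult_left_mono) auto
      also have "\<dots> \<le> Kl * norm d" unfolding Kl_def using M0' Npos
        by (intro mult_right_mono) auto
      finally show ?thesis by (simp add: d_def)
    qed
  qed
  show ?thesis using Kl0 main by blast
qed

lemma sigma_ratio:
  fixes h \<epsilon> K r s :: real
  assumes hp: "0 < h" and he: "h < \<epsilon>" and K0: "0 \<le> K"
    and s: "\<bar>s\<bar> \<le> arccos (h / \<epsilon>)" and rs: "\<bar>r - s\<bar> \<le> K * h / \<epsilon>"
  shows "sigma q r \<le> (1 + K) ^ (2 * (q + 1)) * sigma q s"
proof -
  have e0: "0 < \<epsilon>" using hp he by simp
  have q0: "0 \<le> h / \<epsilon>" "h / \<epsilon> \<le> 1" using hp he e0 by auto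
  have ap: "arccos (h / \<epsilon>) \<le> pi / 2" using arccos_le_pi2 q0 by blast
  have sp: "\<bar>s\<bar> \<le> pi / 2" using s ap by simp
  have "cos (arccos (h / \<epsilon>)) \<le> cos \<bar>s\<bar>"
    using s ap by (intro cos_monotone_0_pi_le) auto
  then have cs: "h / \<epsilon> \<le> cos s" using q0 by simp
  have sig_s: "sigma q s = cos s ^ (2 * (q + 1))" using sp by (simp add: sigma_def)
  show ?thesis
  proof (cases "\<bar>r\<bar> \<le> pi / 2")
    case False
    then have "sigma q r = 0" by (simp add: sigma_def)
    moreover have "0 \<le> (1 + K) ^ (2 * (q + 1)) * sigma q s"
      using K0 sigma_nonneg by simp
    ultimately show ?thesis by simp
  next
    case True
    have cr0: "0 \<le> cos r" using True by (intro cos_ge_zero) auto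
    have "cos r \<le> cos s + \<bar>r - s\<bar>" using cos_lip[of r s] by simp
    also have "\<dots> \<le> cos s + K * (h / \<epsilon>)" using rs by simp
    also have "\<dots> \<le> cos s + K * cos s" using cs K0 by (intro add_left_mono mult_left_mono) auto
    finally have "cos r \<le> (1 + K) * cos s" by (simp add: algebra_simps)
    then have "cos r ^ (2 * (q + 1)) \<le> ((1 + K) * cos s) ^ (2 * (q + 1))"
      using cr0 by (intro power_mono) auto
    also have "\<dots> = (1 + K) ^ (2 * (q + 1)) * sigma q s"
      by (simp only: sig_s power_mult_distrib)
    finally show ?thesis using True by (simp only: sigma_def if_True)
  qed
qed

lemma compact_cell:
  assumes "simplex_map \<Phi>"
  shows "compact (cell \<Phi>)"
proof -
  have lin: "linear (\<lambda>x. \<Phi> x - \<Phi> 0)" using assms by (simp add: simplex_map_def)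
  then have bl: "bounded_linear (\<lambda>x. \<Phi> x - \<Phi> 0)" by (simp add: linear_conv_bounded_linear)
  have c1: "continuous_on UNIV (\<lambda>x. \<Phi> x - \<Phi> 0)" by (rule linear_continuous_on[OF bl])
  have c2: "continuous_on UNIV (\<lambda>x. (\<Phi> x - \<Phi> 0) + \<Phi> 0)"
    by (rule continuous_on_add[OF c1 continuous_on_const])
  have "continuous_on UNIV \<Phi>" using c2 by simp
  moreover have "compact (Sref :: 'a set)" unfolding Sref_def
    by (rule finite_imp_compact_convex_hull) simp
  ultimately show ?thesis unfolding cell_def
    by (meson compact_continuous_image continuous_on_subset subset_UNIV)
qed

lemma cell_bound:
  fixes \<Phi> :: "'a::euclidean_space \<Rightarrow> 'a" and \<phi> :: "'a \<Rightarrow> real" and v :: "'a \<Rightarrow> real"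
  assumes sm: "simplex_map \<Phi>" and sub: "cell \<Phi> \<subseteq> S" and bS: "bounded S"
    and qr: "quad_rule q L \<omega> bh"
    and lip: "\<forall>x\<in>S. \<forall>y\<in>S. \<bar>\<phi> y - \<phi> x\<bar> \<le> Kl * norm (y - x)" and Kl0: "0 \<le> Kl"
    and diam: "diameter (cell \<Phi>) \<le> h" and hp: "0 < h" and he: "h < \<epsilon>"
    and tt: "\<forall>i<L. \<bar>\<phi> (\<Phi> (bh i))\<bar> \<le> \<epsilon> * arccos (h / \<epsilon>)"
    and aff: "\<exists>a c. \<forall>x\<in>cell \<Phi>. v x = a \<bullet> x + c"
  shows "supnorm_on (cell \<Phi>) (rho q \<epsilon> \<phi>) * H1sq \<Phi> v
     \<le> ((1 + Kl) ^ (2 * (q + 1)) * (2 * (diameter S)\<^sup>2 + 2) / \<omega> 0) *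
        QT L \<omega> bh \<Phi> (\<lambda>x. rho q \<epsilon> \<phi> x * ((v x)\<^sup>2 + (norm (pgrad \<Phi> v))\<^sup>2))"
proof -
  define T where "T = cell \<Phi>"
  define \<rho> where "\<rho> = rho q \<epsilon> \<phi>"
  define C1 where "C1 = (1 + Kl) ^ (2 * (q + 1))"
  define D where "D = diameter S"
  define a where "a = pgrad \<Phi> v"
  have e0: "0 < \<epsilon>" using hp he by simp
  have L1: "0 < L" and w0: "0 < \<omega> 0" and bh0: "bh 0 \<in> Sref"
    using qr unfolding quad_rule_def by auto
  define b where "b = \<Phi> (bh 0)"
  have bT: "b \<in> T" unfolding b_def T_def cell_def using bh0 by simp
  have TS: "T \<subseteq> S" using sub T_def by simp
  have bT': "bounded T" using bS TS bounded_subset by blast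
  have cT: "compact T" unfolding T_def using compact_cell[OF sm] .
  have C10: "0 \<le> C1" unfolding C1_def using Kl0 by simp
  have rho0: "0 \<le> \<rho> x" for x unfolding \<rho>_def rho_def by (rule sigma_nonneg)
  have rb: "\<rho> x \<le> C1 * \<rho> b" if xT: "x \<in> T" for x
  proof -
    have "\<bar>\<phi> x - \<phi> b\<bar> \<le> Kl * norm (x - b)" using lip xT bT TS by blast
    also have "norm (x - b) \<le> h"
      using diameter_bounded_bound[OF bT' xT bT] diam by (simp add: dist_norm T_def)
    then have "Kl * norm (x - b) \<le> Kl * h" using Kl0 by (rule mult_left_mono)
    finally have d1: "\<bar>\<phi> x - \<phi> b\<bar> \<le> Kl * h" .
    have "\<bar>\<phi> x / \<epsilon> - \<phi> b / \<epsilon>\<bar> = \<bar>\<phi> x - \<phi> b\<bar> / \<epsilon>"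
      using e0 by (simp add: diff_divide_distrib[symmetric])
    also have "\<dots> \<le> Kl * h / \<epsilon>" using d1 e0 by (simp add: divide_right_mono)
    finally have rs: "\<bar>\<phi> x / \<epsilon> - \<phi> b / \<epsilon>\<bar> \<le> Kl * h / \<epsilon>" .
    have "\<bar>\<phi> b\<bar> \<le> \<epsilon> * arccos (h / \<epsilon>)" using tt L1 unfolding b_def by blast
    then have s: "\<bar>\<phi> b / \<epsilon>\<bar> \<le> arccos (h / \<epsilon>)" using e0 by (simp add: field_simps)
    show ?thesis using sigma_ratio[OF hp he Kl0 s rs, of q]
      unfolding \<rho>_def rho_def C1_def by simp
  qed
  have Tne: "T \<noteq> {}" using bT by blast
  have bdd: "bdd_above ((\<lambda>x. \<bar>\<rho> x\<bar>) ` T)"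
    using rb rho0 by (intro bdd_aboveI2[of _ _ "C1 * \<rho> b"]) auto
  have sup_le: "supnorm_on T \<rho> \<le> C1 * \<rho> b"
    unfolding supnorm_on_def using rb rho0 Tne by (intro cSUP_least) auto
  have sup0: "0 \<le> supnorm_on T \<rho>"
    unfolding supnorm_on_def using cSUP_upper[OF bT bdd] abs_ge_zero[of "\<rho> b"] by linarith
  have "\<exists>c. \<forall>x\<in>T. v x = a \<bullet> x + c"
    unfolding a_def pgrad_def T_def using aff by (rule someI_ex)
  then obtain c where vc: "\<And>x. x \<in> T \<Longrightarrow> v x = a \<bullet> x + c" by blast
  define E where "E = 2 * (v b)\<^sup>2 + (2 * D\<^sup>2 + 1) * (norm a)\<^sup>2"
  have pt: "(v x)\<^sup>2 + (norm a)\<^sup>2 \<le> E" if xT: "x \<in> T" for x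
  proof -
    have vx: "v x = v b + a \<bullet> (x - b)" using vc[OF xT] vc[OF bT] by (simp add: inner_diff_right)
    have "norm (x - b) \<le> D"
      using diameter_bounded_bound[OF bS] xT bT TS by (auto simp: dist_norm D_def)
    then have "\<bar>a \<bullet> (x - b)\<bar> \<le> norm a * D"
      using Cauchy_Schwarz_ineq2[of a "x - b"] mult_left_mono[of "norm (x - b)" D "norm a"] by simp
    then have "\<bar>a \<bullet> (x - b)\<bar>\<^sup>2 \<le> (norm a * D)\<^sup>2"
      by (intro power_mono) auto
    then have "(a \<bullet> (x - b))\<^sup>2 \<le> (norm a * D)\<^sup>2" by simp
    moreover have "(v b + a \<bullet> (x - b))\<^sup>2 \<le> 2 * (v b)\<^sup>2 + 2 * (a \<bullet> (x - b))\<^sup>2"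
    proof -
      have "0 \<le> (v b - a \<bullet> (x - b))\<^sup>2" by simp
      then show ?thesis by (simp add: power2_sum power2_diff)
    qed
    ultimately show ?thesis unfolding vx E_def by (simp add: power_mult_distrib algebra_simps)
  qed
  have E0: "0 \<le> E" unfolding E_def by simp
  have lm: "T \<in> lmeasurable" using cT lmeasurable_compact by blast
  define g where "g = (\<lambda>x. (a \<bullet> x + c)\<^sup>2 + (norm a)\<^sup>2)"
  have H1eq: "H1sq \<Phi> v = integral T g"
    unfolding H1sq_def T_def[symmetric] a_def[symmetric] g_def
    by (rule integral_cong) (simp add: vc)
  have gT: "\<And>x. x \<in> T \<Longrightarrow> norm (g x) \<le> E" using pt vc unfolding g_def by fastforce
  have gint: "g integrable_on T"
  proof -
    have "continuous_on T g" unfolding g_def by (intro continuous_intros)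
    then have "g \<in> borel_measurable (lebesgue_on T)"
      using continuous_imp_measurable_on_sets_lebesgue lm by blast
    then have "g absolutely_integrable_on T"
      using measurable_bounded_by_integrable_imp_absolutely_integrable[of g T "\<lambda>x. E"]
        integrable_on_const[OF lm] gT lm by blast
    then show ?thesis using absolutely_integrable_on_def by blast
  qed
  have "integral T g \<le> integral T (\<lambda>x. E)"
    by (rule integral_le[OF gint integrable_on_const[OF lm]]) (use gT in force)
  also have "integral T (\<lambda>x. E) = measure lebesgue T * E"
    using lmeasure_integral[OF lm] integral_cmul[of T E "\<lambda>x. 1::real"]
    by (simp add: mult.commute)
  finally have H1le: "H1sq \<Phi> v \<le> measure lebesgue T * E" using H1eq by simp
  have mT0: "0 \<le> measure lebesgue T" by simp
  define W where "W = (v b)\<^sup>2 + (norm a)\<^sup>2"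
  have EW: "E \<le> (2 * D\<^sup>2 + 2) * W" unfolding E_def W_def by (simp add: algebra_simps)
  have "supnorm_on T \<rho> * H1sq \<Phi> v \<le> supnorm_on T \<rho> * (measure lebesgue T * E)"
    using H1le sup0 by (rule mult_left_mono)
  also have "\<dots> \<le> (C1 * \<rho> b) * (measure lebesgue T * E)"
    using sup_le mT0 E0 by (intro mult_right_mono) auto
  also have "\<dots> \<le> (C1 * \<rho> b) * (measure lebesgue T * ((2 * D\<^sup>2 + 2) * W))"
    using EW mT0 C10 rho0 by (intro mult_left_mono) auto
  also have "\<dots> = (C1 * (2 * D\<^sup>2 + 2) / \<omega> 0) * (measure lebesgue T * (\<omega> 0 * (\<rho> b * W)))"
    using w0 by (simp add: field_simps)
  also have "\<dots> \<le> (C1 * (2 * D\<^sup>2 + 2) / \<omega> 0) *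
      (measure lebesgue T * (\<Sum>i<L. \<omega> i * (\<rho> (\<Phi> (bh i)) * ((v (\<Phi> (bh i)))\<^sup>2 + (norm a)\<^sup>2))))"
  proof -
    have wpos: "\<forall>i<L. 0 < \<omega> i" using qr unfolding quad_rule_def by auto
    have "\<omega> 0 * (\<rho> b * W) \<le> (\<Sum>i<L. \<omega> i * (\<rho> (\<Phi> (bh i)) * ((v (\<Phi> (bh i)))\<^sup>2 + (norm a)\<^sup>2)))"
      unfolding b_def W_def
      using member_le_sum[of 0 "{..<L}" "\<lambda>i. \<omega> i * (\<rho> (\<Phi> (bh i)) * ((v (\<Phi> (bh i)))\<^sup>2 + (norm a)\<^sup>2))"]
        L1 wpos rho0 by (simp add: less_imp_le)
    then show ?thesis using mT0 C10 w0
      by (intro mult_left_mono) auto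
  qed
  finally show ?thesis
    unfolding QT_def T_def[symmetric] \<rho>_def[symmetric] C1_def[symmetric] D_def[symmetric] a_def[symmetric]
    by (simp add: mult.assoc)
qed

theorem mainTheorem4:
  fixes \<Omega> :: "'a::euclidean_space set" and \<phi> :: "'a \<Rightarrow> real"
    and c0 c1 :: real and q L :: nat and \<omega> :: "nat \<Rightarrow> real" and bh :: "nat \<Rightarrow> 'a"
    and \<kappa> :: real
  assumes "DIM('a) \<in> {2, 3}"
    and "polyhedral_domain \<Omega>"
    and "smooth_on_closure \<phi> \<Omega>"
    and "0 < c0"
    and "\<forall>x\<in>closure \<Omega>. c0 \<le> norm (grad \<phi> x) \<and> norm (grad \<phi> x) \<le> c1"
    and "quad_rule q L \<omega> bh"
  shows "\<exists>C. \<forall>\<epsilon> h \<T> v.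
     shape_regular_mesh \<kappa> \<Omega> \<T> \<and> h = meshsize \<T> \<and> 0 < h \<and> h < \<epsilon> \<and>
     v \<in> Vtilde (Ttilde L bh \<phi> \<epsilon> h \<T>) \<longrightarrow>
       (1 / \<epsilon>) * (\<Sum>\<Phi>\<in>Ttilde L bh \<phi> \<epsilon> h \<T>.
           supnorm_on (cell \<Phi>) (rho q \<epsilon> \<phi>) * H1sq \<Phi> v)
       \<le> C * hnorm_sq q L \<omega> bh \<epsilon> \<phi> (Ttilde L bh \<phi> \<epsilon> h \<T>) v"
proof -
  obtain U where U: "closure \<Omega> \<subseteq> U" "smooth_on U \<phi>"
    using assms(3) unfolding smooth_on_closure_def by blast
  have oU: "open U" using U(2) unfolding smooth_on_def by blast
  have bO: "bounded \<Omega>" using assms(2) unfolding polyhedral_domain_def by blast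
  have cS: "compact (closure \<Omega>)" using bO compact_closure by blast
  have bS: "bounded (closure \<Omega>)" using cS compact_imp_bounded by blast
  obtain Kl where Kl0: "0 \<le> Kl" and lip: "\<forall>x\<in>closure \<Omega>. \<forall>y\<in>closure \<Omega>. \<bar>\<phi> y - \<phi> x\<bar> \<le> Kl * norm (y - x)"
    using lipschitz_phi[OF cS oU U(1) U(2)] by blast
  define C where "C = (1 + Kl) ^ (2 * (q + 1)) * (2 * (diameter (closure \<Omega>))\<^sup>2 + 2) / \<omega> 0"
  show ?thesis
  proof (intro exI[of _ C] allI impI)
    fix \<epsilon> h \<T> v
    assume H: "shape_regular_mesh \<kappa> \<Omega> \<T> \<and> h = meshsize \<T> \<and> 0 < h \<and> h < \<epsilon> \<and>
     v \<in> Vtilde (Ttilde L bh \<phi> \<epsilon> h \<T>)"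
    define Tt where "Tt = Ttilde L bh \<phi> \<epsilon> h \<T>"
    have mesh: "simplicial_mesh \<Omega> \<T>" using H unfolding shape_regular_mesh_def by blast
    have fin: "finite \<T>" using mesh unfolding simplicial_mesh_def by blast
    have hp: "0 < h" and he: "h < \<epsilon>" using H by auto
    have e0: "0 < \<epsilon>" using hp he by simp
    have vV: "v \<in> Vtilde Tt" using H unfolding Tt_def by blast
    have each: "supnorm_on (cell \<Phi>) (rho q \<epsilon> \<phi>) * H1sq \<Phi> v
       \<le> C * QT L \<omega> bh \<Phi> (\<lambda>x. rho q \<epsilon> \<phi> x * ((v x)\<^sup>2 + (norm (pgrad \<Phi> v))\<^sup>2))"
      if P: "\<Phi> \<in> Tt" for \<Phi>
    proof -
      have PT: "\<Phi> \<in> \<T>" using P unfolding Tt_def Ttilde_def by blast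
      have tt: "\<forall>i<L. \<bar>\<phi> (\<Phi> (bh i))\<bar> \<le> \<epsilon> * arccos (h / \<epsilon>)"
        using P unfolding Tt_def Ttilde_def by blast
      have sm: "simplex_map \<Phi>" using mesh PT unfolding simplicial_mesh_def Ball_def by blast
      have sub: "cell \<Phi> \<subseteq> closure \<Omega>" using mesh PT unfolding simplicial_mesh_def by blast
      have "diameter (cell \<Phi>) \<le> Max (diameter ` cell ` \<T>)"
        using fin PT by (intro Max_ge) auto
      then have diam: "diameter (cell \<Phi>) \<le> h" using H unfolding meshsize_def by simp
      have aff: "\<exists>a c. \<forall>x\<in>cell \<Phi>. v x = a \<bullet> x + c" using vV P unfolding Vtilde_def by blast
      show ?thesis unfolding C_def
        by (rule cell_bound[OF sm sub bS assms(6) lip Kl0 diam hp he tt aff])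
    qed
    have "(\<Sum>\<Phi>\<in>Tt. supnorm_on (cell \<Phi>) (rho q \<epsilon> \<phi>) * H1sq \<Phi> v)
       \<le> (\<Sum>\<Phi>\<in>Tt. C * QT L \<omega> bh \<Phi> (\<lambda>x. rho q \<epsilon> \<phi> x * ((v x)\<^sup>2 + (norm (pgrad \<Phi> v))\<^sup>2)))"
      using each by (rule sum_mono)
    then have "(1 / \<epsilon>) * (\<Sum>\<Phi>\<in>Tt. supnorm_on (cell \<Phi>) (rho q \<epsilon> \<phi>) * H1sq \<Phi> v)
       \<le> (1 / \<epsilon>) * (\<Sum>\<Phi>\<in>Tt. C * QT L \<omega> bh \<Phi> (\<lambda>x. rho q \<epsilon> \<phi> x * ((v x)\<^sup>2 + (norm (pgrad \<Phi> v))\<^sup>2)))"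
      using e0 by (intro mult_left_mono) auto
    also have "\<dots> = C * hnorm_sq q L \<omega> bh \<epsilon> \<phi> Tt v"
      unfolding hnorm_sq_def by (simp add: sum_distrib_left[symmetric])
    finally show "(1 / \<epsilon>) * (\<Sum>\<Phi>\<in>Ttilde L bh \<phi> \<epsilon> h \<T>.
           supnorm_on (cell \<Phi>) (rho q \<epsilon> \<phi>) * H1sq \<Phi> v)
       \<le> C * hnorm_sq q L \<omega> bh \<epsilon> \<phi> (Ttilde L bh \<phi> \<epsilon> h \<T>) v" unfolding Tt_def .
  qed
qed

end
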